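(* On the region $\{(t,x^1,x^2,x^3)\}\subset\mathbb R^4$ consider the de Sitter metric $ds^2=-dt^2+e^{lt}\delta_{ij}dx^idx^j$ ($l\neq0$ constant, $i,j=1,2,3$) and the symmetric tensor $K$ with components $K_{ij}=e^{2lt}\delta_{ij}$, $K_{tt}=K_{ti}=0$. For a constant $c\ge0$ let $\phi(t)=e^{lt/2}(1+ce^{lt})^{-1/2}$ and $\psi(t)=e^{-lt/2}(1+ce^{lt})^{1/2}$, and define the vector fields $$\Upsilon_0=\phi(t)\,\partial_t,\qquad \Upsilon_i=\phi(t)\,x^i\,\partial_t-\tfrac{2}{l}\psi(t)\,\partial_i\quad(i=1,2,3).$$ Then $\mathcal L_{\Upsilon_0}g=2\Omega_0\,(g+cK)$ and $\mathcal L_{\Upsilon_i}g=2x^i\Omega_0\,(g+cK)$ with $\Omega_0=\tfrac{l}{2}e^{lt/2}(1+ce^{lt})^{-3/2}$. For $c=0$ these reduce to proper conformal Killing vectors of $g$. Consequently, for the geodesic Lagrangian $L=\frac{1}{2n}\left[-\dot t^2+e^{lt}\delta_{ij}\dot x^i\dot x^j\right]-\frac{m^2}{2}n$, along any solution of its Euler–Lagrange equations on which $\kappa:=K^{\mu\nu}p_\mu p_\nu=p_1^2+p_2^2+p_3^2\neq0$, the quantities $\Upsilon_0^\mu p_\mu$ and $\Upsilon_i^\mu p_\mu$ with $c=m^2/\kappa$ are constant.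
   Context: $n(\lambda)>0$ is the einbein, dots denote $d/d\lambda$, $p_\mu=\partial L/\partial\dot{\mathrm x}^\mu$, $K^{\mu\nu}$ is $K$ with indices raised by $g$ (so $K=\sum_i\partial_i\otimes\partial_i$ with indices lowered, a Killing tensor built from spatial translations). *)

theory Defs
  imports "HOL-Analysis.Analysis"
begin

text \<open>Coordinates: a point of R^4 is q :: nat \<Rightarrow> real, with q 0 = t and q i = x^i (i = 1,2,3);
  components with index \<ge> 4 are ignored. Tensor / vector fields are given by components.\<close>

definition pd :: "((nat \<Rightarrow> real) \<Rightarrow> real) \<Rightarrow> nat \<Rightarrow> (nat \<Rightarrow> real) \<Rightarrow> real" where
  "pd f mu q = deriv (\<lambda>s. f (q(mu := s))) (q mu)"

definition gmet :: "real \<Rightarrow> (nat \<Rightarrow> real) \<Rightarrow> nat \<Rightarrow> nat \<Rightarrow> real" where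
  "gmet l q mu nu = (if mu = nu then (if mu = 0 then -1 else exp (l * q 0)) else 0)"

definition ginv :: "real \<Rightarrow> (nat \<Rightarrow> real) \<Rightarrow> nat \<Rightarrow> nat \<Rightarrow> real" where
  "ginv l q mu nu = (if mu = nu then (if mu = 0 then -1 else exp (- l * q 0)) else 0)"

definition Kten :: "real \<Rightarrow> (nat \<Rightarrow> real) \<Rightarrow> nat \<Rightarrow> nat \<Rightarrow> real" where
  "Kten l q mu nu = (if mu = nu \<and> mu \<noteq> 0 then exp (2 * l * q 0) else 0)"

definition Kup :: "real \<Rightarrow> (nat \<Rightarrow> real) \<Rightarrow> nat \<Rightarrow> nat \<Rightarrow> real" where
  "Kup l q mu nu = (\<Sum>a<4. \<Sum>b<4. ginv l q mu a * ginv l q nu b * Kten l q a b)"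

definition lie :: "((nat \<Rightarrow> real) \<Rightarrow> nat \<Rightarrow> real) \<Rightarrow> ((nat \<Rightarrow> real) \<Rightarrow> nat \<Rightarrow> nat \<Rightarrow> real)
                  \<Rightarrow> (nat \<Rightarrow> real) \<Rightarrow> nat \<Rightarrow> nat \<Rightarrow> real" where
  "lie V T q mu nu = (\<Sum>r<4. V q r * pd (\<lambda>q'. T q' mu nu) r q
                           + T q r nu * pd (\<lambda>q'. V q' r) mu q
                           + T q mu r * pd (\<lambda>q'. V q' r) nu q)"

definition phi :: "real \<Rightarrow> real \<Rightarrow> real \<Rightarrow> real" where
  "phi l c t = exp (l * t / 2) * (1 + c * exp (l * t)) powr (-1/2)"

definition psi :: "real \<Rightarrow> real \<Rightarrow> real \<Rightarrow> real" where
  "psi l c t = exp (- l * t / 2) * (1 + c * exp (l * t)) powr (1/2)"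

definition Omega0 :: "real \<Rightarrow> real \<Rightarrow> real \<Rightarrow> real" where
  "Omega0 l c t = l / 2 * exp (l * t / 2) * (1 + c * exp (l * t)) powr (-3/2)"

definition Ups0 :: "real \<Rightarrow> real \<Rightarrow> (nat \<Rightarrow> real) \<Rightarrow> nat \<Rightarrow> real" where
  "Ups0 l c q r = (if r = 0 then phi l c (q 0) else 0)"

definition Upsi :: "real \<Rightarrow> real \<Rightarrow> nat \<Rightarrow> (nat \<Rightarrow> real) \<Rightarrow> nat \<Rightarrow> real" where
  "Upsi l c i q r = (if r = 0 then phi l c (q 0) * q i
                     else if r = i then - (2 / l) * psi l c (q 0) else 0)"

definition proper_ckv :: "real \<Rightarrow> ((nat \<Rightarrow> real) \<Rightarrow> nat \<Rightarrow> real) \<Rightarrow> bool" where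
  "proper_ckv l V \<longleftrightarrow> (\<exists>sigma. (\<forall>q mu nu. mu < 4 \<longrightarrow> nu < 4 \<longrightarrow>
        lie V (gmet l) q mu nu = 2 * sigma q * gmet l q mu nu)
      \<and> (\<exists>q q'. sigma q \<noteq> sigma q'))"

definition lag :: "real \<Rightarrow> real \<Rightarrow> real \<Rightarrow> (nat \<Rightarrow> real) \<Rightarrow> (nat \<Rightarrow> real) \<Rightarrow> real" where
  "lag l m n q v = 1 / (2 * n) * (- ((v 0)^2) + exp (l * q 0) * (\<Sum>i\<in>{1..3}. (v i)^2)) - m^2 / 2 * n"

definition mom :: "real \<Rightarrow> real \<Rightarrow> real \<Rightarrow> (nat \<Rightarrow> real) \<Rightarrow> (nat \<Rightarrow> real) \<Rightarrow> nat \<Rightarrow> real" where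
  "mom l m n q v mu = deriv (\<lambda>s. lag l m n q (v(mu := s))) (v mu)"

text \<open>(n, x) with velocity xd solves the Euler-Lagrange equations of L on the parameter set I:
  xd is the derivative of x, n > 0, d/dlambda (dL/dxdot^mu) = dL/dx^mu, and dL/dn = 0
  (L does not depend on ndot).\<close>
definition EL_solution :: "real \<Rightarrow> real \<Rightarrow> real set \<Rightarrow> (real \<Rightarrow> real) \<Rightarrow> (real \<Rightarrow> nat \<Rightarrow> real)
                            \<Rightarrow> (real \<Rightarrow> nat \<Rightarrow> real) \<Rightarrow> bool" where
  "EL_solution l m I n x xd \<longleftrightarrow> (\<forall>s\<in>I. n s > 0
     \<and> (\<forall>mu<4. ((\<lambda>u. x u mu) has_real_derivative xd s mu) (at s))
     \<and> (\<forall>mu<4. ((\<lambda>u. mom l m (n u) (x u) (xd u) mu) has_real_derivative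
                  pd (\<lambda>q. lag l m (n s) q (xd s)) mu (x s)) (at s))
     \<and> deriv (\<lambda>nn. lag l m nn (x s) (xd s)) (n s) = 0)"

definition contr :: "(nat \<Rightarrow> real) \<Rightarrow> (nat \<Rightarrow> real) \<Rightarrow> real" where
  "contr V p = (\<Sum>mu<4. V mu * p mu)"

definition kappa :: "real \<Rightarrow> (nat \<Rightarrow> real) \<Rightarrow> (nat \<Rightarrow> real) \<Rightarrow> real" where
  "kappa l q p = (\<Sum>mu<4. \<Sum>nu<4. Kup l q mu nu * p mu * p nu)"

end

theory Submission
  imports Defs
begin
lemma pw1: "(w::real) > 0 \<Longrightarrow> w powr (-(3/2)) = w powr (-(1/2)) / w"
proof -
  assume w: "w > 0"
  have "w powr (-(1/2)) = w powr (-(3/2) + 1)" by simp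
  also have "\<dots> = w powr (-(3/2)) * w powr 1" by (rule powr_add)
  also have "\<dots> = w powr (-(3/2)) * w" using w by simp
  finally show ?thesis using w by simp
qed
lemma pw2: "(w::real) > 0 \<Longrightarrow> w powr (1/2) = w * w powr (-(1/2))"
proof -
  assume w: "w > 0"
  have "w powr (1/2) = w powr (1 + (-(1/2)))" by simp
  also have "\<dots> = w powr 1 * w powr (-(1/2))" by (rule powr_add)
  also have "\<dots> = w * w powr (-(1/2))" using w by simp
  finally show ?thesis .
qed
lemma phi_alg: "(w::real) > 0 \<Longrightarrow> B = A / w \<Longrightarrow> w = 1 + c * X \<Longrightarrow>
   E * l * A / 2 - B * (X * l * c) * E / 2 = l / 2 * E * B"
proof -
  assume a: "(w::real) > 0" "B = A / w" "w = 1 + c * X"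
  then have "A = B * (1 + c * X)" by simp
  then show ?thesis by (simp add: algebra_simps)
qed

lemma phi_deriv: assumes "c \<ge> 0" shows "(phi l c has_real_derivative Omega0 l c t) (at t)"
proof -
  have w: "1 + c * exp (l*t) > 0" using assms by (simp add: add_pos_nonneg)
  show ?thesis unfolding phi_def[abs_def]
    apply (rule derivative_eq_intros refl | simp add: w)+
    unfolding Omega0_def minus_divide_left[symmetric]
    apply (rule phi_alg[OF w pw1[OF w] refl])
    done
qed

lemma psi_alg: "(w::real) > 0 \<Longrightarrow> C = w * A \<Longrightarrow> w = 1 + c * X \<Longrightarrow>
   A * (X * l * c) * F / 2 - F * l * C / 2 = - (l * F * A / 2)"
  by (simp add: field_simps)

lemma psi_deriv: assumes "c \<ge> 0" shows "(psi l c has_real_derivative 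
   - (l/2) * exp (- l * t / 2) * (1 + c * exp (l * t)) powr (-1/2)) (at t)"
proof -
  have w: "1 + c * exp (l*t) > 0" using assms by (simp add: add_pos_nonneg)
  show ?thesis unfolding psi_def[abs_def]
    apply (rule derivative_eq_intros refl | simp add: w)+
    apply (rule psi_alg[OF w pw2[OF w] refl])
    done
qed
lemma pd_intro: "((\<lambda>s. f (q(r:=s))) has_real_derivative D) (at (q r)) \<Longrightarrow> pd f r q = D"
  unfolding pd_def by (rule DERIV_imp_deriv)

lemma pd_const: "(\<And>s. f (q(r:=s)) = f q) \<Longrightarrow> pd f r q = 0"
  by (rule pd_intro) (simp)

lemma pd_gmet: "pd (\<lambda>q'. gmet l q' mu nu) r q = (if r = 0 \<and> mu = nu \<and> mu \<noteq> 0 then l * exp (l * q 0) else 0)"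
proof (cases "r = 0 \<and> mu = nu \<and> mu \<noteq> 0")
  case True
  then have "(\<lambda>s. gmet l (q(r:=s)) mu nu) = (\<lambda>s. exp (l * s))" by (auto simp: gmet_def)
  then show ?thesis using True
    by (auto intro!: pd_intro derivative_eq_intros)
next
  case False
  then show ?thesis by (auto intro!: pd_const simp: gmet_def)
qed

lemma pd_Ups0: "c \<ge> 0 \<Longrightarrow> pd (\<lambda>q'. Ups0 l c q' r) mu q = (if r = 0 \<and> mu = 0 then Omega0 l c (q 0) else 0)"
proof (cases "r = 0 \<and> mu = 0")
  case True
  assume c: "c \<ge> 0"
  then have "(\<lambda>s. Ups0 l c (q(mu:=s)) r) = phi l c" using True by (auto simp: Ups0_def)
  then show ?thesis using True phi_deriv[OF c]
    by (auto intro!: pd_intro)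
next
  case False
  then show ?thesis by (auto intro!: pd_const simp: Ups0_def)
qed

lemma pd_Upsi: assumes c: "c \<ge> 0" and l: "l \<noteq> 0" and i: "i \<noteq> 0"
  shows "pd (\<lambda>q'. Upsi l c i q' r) mu q =
    (if r = 0 then (if mu = 0 then Omega0 l c (q 0) * q i else if mu = i then phi l c (q 0) else 0)
     else if r = i then (if mu = 0 then phi l c (q 0) / exp (l * q 0) else 0) else 0)"
proof -
  consider "r = 0" "mu = 0" | "r = 0" "mu = i" | "r = 0" "mu \<noteq> 0" "mu \<noteq> i"
    | "r = i" "mu = 0" | "r = i" "mu \<noteq> 0" | "r \<noteq> 0" "r \<noteq> i" by blast
  then show ?thesis
  proof cases
    case 1
    then have "(\<lambda>s. Upsi l c i (q(mu:=s)) r) = (\<lambda>s. phi l c s * q i)" using i by (auto simp: Upsi_def)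
    then show ?thesis using 1 DERIV_cmult_right[OF phi_deriv[OF c], of l "q i" "q 0"]
      by (auto intro!: pd_intro)
  next
    case 2
    then have "(\<lambda>s. Upsi l c i (q(mu:=s)) r) = (\<lambda>s. phi l c (q 0) * s)" using i by (auto simp: Upsi_def)
    then show ?thesis using 2 i
      by (auto intro!: pd_intro derivative_eq_intros)
  next
    case 3
    then show ?thesis by (auto intro!: pd_const simp: Upsi_def)
  next
    case 4
    then have e: "(\<lambda>s. Upsi l c i (q(mu:=s)) r) = (\<lambda>s. - (2 / l) * psi l c s)" using i by (auto simp: Upsi_def)
    have v: "- (2 / l) * (- (l/2) * exp (- l * q 0 / 2) * (1 + c * exp (l * q 0)) powr (-1/2))
        = phi l c (q 0) / exp (l * q 0)"
      using l by (simp add: phi_def field_simps exp_add[symmetric])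
    have D: "((\<lambda>s. - (2 / l) * psi l c s) has_real_derivative - (2 / l) * (- (l/2) * exp (- l * q 0 / 2) * (1 + c * exp (l * q 0)) powr (-1/2))) (at (q 0))"
      by (rule DERIV_cmult[OF psi_deriv[OF c]])
    have "pd (\<lambda>q'. Upsi l c i q' r) mu q = phi l c (q 0) / exp (l * q 0)"
      apply (rule pd_intro) unfolding e using D v 4 by simp
    then show ?thesis using 4 i by simp
  next
    case 5
    then show ?thesis using i by (auto intro!: pd_const simp: Upsi_def)
  next
    case 6
    then show ?thesis by (auto intro!: pd_const simp: Upsi_def)
  qed
qed
lemma sum4: "(\<Sum>r<(4::nat). f r) = f 0 + f 1 + f 2 + (f 3 :: real)"
  by (simp add: eval_nat_numeral)

lemma lt4: "(mu::nat) < 4 \<Longrightarrow> mu = 0 \<or> mu = 1 \<or> mu = 2 \<or> mu = 3" by arith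

lemma id1: "c \<ge> 0 \<Longrightarrow> l * phi l c t = 2 * Omega0 l c t * (1 + c * exp (l * t))"
proof -
  assume c: "c \<ge> 0"
  have w: "1 + c * exp (l*t) > 0" using c by (simp add: add_pos_nonneg)
  have a: "\<And>A E (w::real). w \<noteq> 0 \<Longrightarrow> l * (E * A) = 2 * (l / 2 * E * (A / w)) * w"
    by simp
  show ?thesis unfolding phi_def Omega0_def minus_divide_left[symmetric] pw1[OF w] using w by (intro a) simp
qed

lemma exp2: "exp (2 * l * (t::real)) = exp (l * t) * exp (l * t)"
  by (simp add: exp_add[symmetric] mult.commute)

lemma id1': "c \<ge> 0 \<Longrightarrow> 2 * Omega0 l c t * (exp (l*t) + c*(exp(l*t)*exp(l*t))) = phi l c t * (l * exp (l * t))"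
proof -
  assume c: "c \<ge> 0"
  have "2 * Omega0 l c t * (exp (l*t) + c*(exp(l*t)*exp(l*t))) = (2 * Omega0 l c t * (1 + c * exp (l * t))) * exp (l*t)"
    by (simp add: algebra_simps)
  also have "\<dots> = (l * phi l c t) * exp (l*t)" using id1[OF c, of l t] by simp
  also have "\<dots> = phi l c t * (l * exp (l * t))" by simp
  finally show ?thesis .
qed

lemma id1'': "c \<ge> 0 \<Longrightarrow> 2 * (Omega0 l c t * (exp (l*t) + c*(exp(l*t)*exp(l*t)))) = phi l c t * (l * exp (l * t))"
  using id1' by (simp add: mult.assoc)

lemma lie_Ups0: assumes c: "c \<ge> 0" and mu: "mu < 4" and nu: "nu < 4"
  shows "lie (Ups0 l c) (gmet l) q mu nu = 2 * Omega0 l c (q 0) * (gmet l q mu nu + c * Kten l q mu nu)"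
  unfolding lie_def sum4 pd_gmet pd_Ups0[OF c]
  using lt4[OF mu] lt4[OF nu] 
  apply (elim disjE)
  apply (simp_all add: Ups0_def gmet_def Kten_def exp2 id1'[OF c])
  done

lemma lie_Upsi: assumes c: "c \<ge> 0" and l: "l \<noteq> 0" and i: "i \<in> {1..3}" and mu: "mu < 4" and nu: "nu < 4"
  shows "lie (Upsi l c i) (gmet l) q mu nu = 2 * q i * Omega0 l c (q 0) * (gmet l q mu nu + c * Kten l q mu nu)"
proof -
  have i': "i = 1 \<or> i = 2 \<or> i = 3" using i by auto
  have i0: "i \<noteq> 0" using i by auto
  show ?thesis
  unfolding lie_def sum4 pd_gmet pd_Upsi[OF c l i0]
  using lt4[OF mu] lt4[OF nu] i'
  apply (elim disjE)
  apply (simp_all add: Upsi_def gmet_def Kten_def exp2 id1'[OF c] id1''[OF c])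
  done
qed
lemma const_on: assumes "is_interval I" "\<And>u. u \<in> I \<Longrightarrow> (f has_real_derivative 0) (at u)" "a \<in> I" "b \<in> I"
  shows "f a = f b"
proof -
  have "convex I" by (rule is_interval_convex[OF assms(1)])
  then obtain k where "\<forall>x\<in>I. f x = k"
    using has_field_derivative_zero_constant[of I f] assms(2) has_field_derivative_at_within by blast
  then show ?thesis using assms by simp
qed

lemma sum13: "(\<Sum>i\<in>{1..3::nat}. f i) = f 1 + f 2 + (f 3 :: real)"
  by (simp add: eval_nat_numeral atLeastAtMostSuc_conv)

lemma mom0: "mom l m n q v 0 = - v 0 / n"
proof -
  have "(\<lambda>s. lag l m n q (v(0 := s))) = (\<lambda>s. 1 / (2 * n) * (- (s^2) + exp (l * q 0) * (\<Sum>i\<in>{1..3}. (v i)^2)) - m^2 / 2 * n)"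
    by (simp add: lag_def sum13)
  moreover have "((\<lambda>s. 1 / (2 * n) * (- (s^2) + exp (l * q 0) * (\<Sum>i\<in>{1..3}. (v i)^2)) - m^2 / 2 * n) has_real_derivative - v 0 / n) (at (v 0))"
    by (rule derivative_eq_intros refl | simp)+
  ultimately show ?thesis unfolding mom_def by (simp add: DERIV_imp_deriv)
qed

lemma momi: assumes i: "i \<in> {1..3}" shows "mom l m n q v i = exp (l * q 0) * v i / n"
proof -
  define S where "S = (\<Sum>j\<in>{1..3}. (v j)^2) - (v i)^2"
  have i3: "i = 1 \<or> i = 2 \<or> i = 3" using i by auto
  have "(\<Sum>j\<in>{1..3}. ((v(i:=s)) j)^2) = s^2 + S" for s
    unfolding S_def sum13 using i3 by auto
  then have "(\<lambda>s. lag l m n q (v(i := s))) = (\<lambda>s. 1 / (2 * n) * (- ((v 0)^2) + exp (l * q 0) * (s^2 + S)) - m^2 / 2 * n)"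
    using i by (simp add: lag_def)
  moreover have "((\<lambda>s. 1 / (2 * n) * (- ((v 0)^2) + exp (l * q 0) * (s^2 + S)) - m^2 / 2 * n) has_real_derivative exp (l * q 0) * v i / n) (at (v i))"
    by (rule derivative_eq_intros refl | simp)+
  ultimately show ?thesis unfolding mom_def by (simp add: DERIV_imp_deriv)
qed

lemma pd_lag0: "pd (\<lambda>q. lag l m n q v) 0 q = 1 / (2 * n) * (l * exp (l * q 0) * (\<Sum>i\<in>{1..3}. (v i)^2))"
  apply (rule pd_intro) unfolding lag_def
  by (rule derivative_eq_intros refl | simp)+

lemma pd_lagi: "i \<noteq> 0 \<Longrightarrow> pd (\<lambda>q. lag l m n q v) i q = 0"
  by (rule pd_const) (simp add: lag_def)

lemma dlag_n: "n > 0 \<Longrightarrow> deriv (\<lambda>nn. lag l m nn q v) n =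
   - (- ((v 0)^2) + exp (l * q 0) * (\<Sum>i\<in>{1..3}. (v i)^2)) / (2 * n^2) - m^2 / 2"
  apply (rule DERIV_imp_deriv) unfolding lag_def
  apply (rule derivative_eq_intros refl | simp)+
  by (simp add: power2_eq_square minus_divide_left)

lemma kappa_eq: "kappa l q p = (\<Sum>i\<in>{1..3}. (p i)^2)"
  unfolding kappa_def Kup_def sum4 sum13 by (simp add: ginv_def Kten_def power2_eq_square exp_add[symmetric])
lemma Omega_phi: "c \<ge> 0 \<Longrightarrow> Omega0 l c t = l / 2 * phi l c t / (1 + c * exp (l * t))"
proof -
  assume c: "c \<ge> 0"
  have w: "1 + c * exp (l*t) > 0" using c by (simp add: add_pos_nonneg)
  show ?thesis using id1[OF c, of l t] w by (simp add: field_simps)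
qed

lemma psi_deriv': assumes c: "c \<ge> 0" and l: "l \<noteq> 0"
  shows "(psi l c has_real_derivative - (l / 2) * phi l c t / exp (l * t)) (at t)"
proof -
  have "- (l/2) * exp (- l * t / 2) * (1 + c * exp (l * t)) powr (-1/2) = - (l / 2) * phi l c t / exp (l * t)"
    by (simp add: phi_def field_simps exp_add[symmetric])
  then show ?thesis using psi_deriv[OF c, of l t] by (simp add: mult.commute)
qed

lemma contr_Ups0: "contr (Ups0 l c q) p = phi l c (q 0) * p 0"
  by (simp add: contr_def sum4 Ups0_def)

lemma contr_Upsi: "i \<in> {1..3} \<Longrightarrow> contr (Upsi l c i q) p = phi l c (q 0) * q i * p 0 - (2 / l) * psi l c (q 0) * p i"
proof -
  assume "i \<in> {1..3}"
  then have "i = 1 \<or> i = 2 \<or> i = 3" by auto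
  then show ?thesis by (auto simp: contr_def sum4 Upsi_def)
qed

lemma alg: fixes n K c E S v0 m l ph Om w :: real
  assumes n: "n > 0" and K: "K \<noteq> 0" and w: "w = 1 + c * E" and E: "E > 0" and c: "c = m^2 / K"
    and KS: "K = E^2 * S / n^2"
    and con: "- (- (v0^2) + E * S) / (2 * n^2) - m^2 / 2 = 0"
    and Om: "Om = l / 2 * ph / w" and wp: "w > 0"
  shows "Om * v0 * (- v0 / n) + ph * (1 / (2 * n) * (l * E * S)) = 0"
proof -
  have c1: "v0^2 - E * S = m^2 * n^2" using con n by (simp add: field_simps)
  have kn: "K * n^2 = E^2 * S" using KS n by (simp add: field_simps)
  have ck: "c * K = m^2" using c K by simp
  have "c * E^2 * S = c * (K * n^2)" using kn by simp
  also have "\<dots> = m^2 * n^2" using ck by (simp add: algebra_simps)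
  finally have c2: "c * E^2 * S = m^2 * n^2" .
  have h1: "E * S * w = v0^2" using c1 c2 w by (simp add: algebra_simps power2_eq_square)
  have h2: "l * ph = Om * w * 2" using Om wp by (simp add: field_simps)
  have "E * (S * (l * ph)) = 2 * Om * (E * S * w)" using h2 by (simp add: algebra_simps)
  also have "\<dots> = Om * (v0 * (v0 * 2))" using h1 by (simp add: power2_eq_square algebra_simps)
  finally have h3: "E * (S * (l * ph)) = Om * (v0 * (v0 * 2))" .
  show ?thesis using h3 n by (simp add: field_simps power2_eq_square)
qed
lemma part3:
  assumes l: "l \<noteq> 0" and I: "is_interval I" and EL: "EL_solution l m I n x xd"
    and Kn: "\<forall>s\<in>I. kappa l (x s) (mom l m (n s) (x s) (xd s)) \<noteq> 0"
    and s0: "s0 \<in> I" and a: "a \<in> I" and b: "b \<in> I"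
    and cdef: "c = m^2 / kappa l (x s0) (mom l m (n s0) (x s0) (xd s0))"
  shows "contr (Ups0 l c (x a)) (mom l m (n a) (x a) (xd a))
              = contr (Ups0 l c (x b)) (mom l m (n b) (x b) (xd b))
          \<and> (\<forall>i\<in>{1..3}. contr (Upsi l c i (x a)) (mom l m (n a) (x a) (xd a))
              = contr (Upsi l c i (x b)) (mom l m (n b) (x b) (xd b)))"
proof -
  define P where "P u j = mom l m (n u) (x u) (xd u) j" for u j
  have npos: "n s > 0" if "s \<in> I" for s using EL that by (simp add: EL_solution_def)
  have dx: "((\<lambda>u. x u mu) has_real_derivative xd s mu) (at s)" if "s \<in> I" "mu < 4" for s mu
    using EL that by (simp add: EL_solution_def)
  have dP: "((\<lambda>u. P u mu) has_real_derivative pd (\<lambda>q. lag l m (n s) q (xd s)) mu (x s)) (at s)"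
    if "s \<in> I" "mu < 4" for s mu
    using EL that by (simp add: EL_solution_def P_def)
  have con: "deriv (\<lambda>nn. lag l m nn (x s) (xd s)) (n s) = 0" if "s \<in> I" for s
    using EL that by (simp add: EL_solution_def)
  have Pconst: "P u j = P s0 j" if "u \<in> I" "j \<in> {1..3}" for u j
  proof (rule const_on[OF I _ that(1) s0])
    fix v assume v: "v \<in> I"
    have "j < 4" "j \<noteq> 0" using that by auto
    then show "((\<lambda>u. P u j) has_real_derivative 0) (at v)"
      using dP[OF v, of j] pd_lagi by simp
  qed
  define K where "K = kappa l (x s0) (P s0)"
  have kap: "kappa l (x u) (P u) = K" if "u \<in> I" for u
    unfolding K_def kappa_eq using Pconst[OF that] by simp
  have K0: "K \<noteq> 0" using Kn s0 unfolding K_def P_def by auto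
  have Kpos: "K > 0"
  proof -
    have "K \<ge> 0" unfolding K_def kappa_eq by (simp add: sum_nonneg)
    then show ?thesis using K0 by simp
  qed
  have cK: "c = m^2 / K" using cdef unfolding K_def P_def by simp
  have c: "c \<ge> 0" using cK Kpos by simp
  define F0 where "F0 u = phi l c (x u 0) * P u 0" for u
  have dF0: "(F0 has_real_derivative 0) (at s)" if s: "s \<in> I" for s
  proof -
    have d1: "((\<lambda>u. phi l c (x u 0)) has_real_derivative Omega0 l c (x s 0) * xd s 0) (at s)"
      by (rule DERIV_chain2[OF phi_deriv[OF c] dx[OF s]]) simp
    have d2: "((\<lambda>u. P u 0) has_real_derivative 1 / (2 * n s) * (l * exp (l * x s 0) * (\<Sum>i\<in>{1..3}. (xd s i)^2))) (at s)"
      using dP[OF s, of 0] by (simp add: pd_lag0)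
    have D: "(F0 has_real_derivative Omega0 l c (x s 0) * xd s 0 * P s 0 + 1 / (2 * n s) * (l * exp (l * x s 0) * (\<Sum>i\<in>{1..3}. (xd s i)^2)) * phi l c (x s 0)) (at s)"
      unfolding F0_def by (rule DERIV_mult[OF d1 d2])
    define E where "E = exp (l * x s 0)"
    define S where "S = (\<Sum>i\<in>{1..3}. (xd s i)^2)"
    have E: "E > 0" unfolding E_def by simp
    have P0: "P s 0 = - xd s 0 / n s" unfolding P_def by (simp add: mom0)
    have KS: "K = E^2 * S / (n s)^2"
    proof -
      have "K = (\<Sum>i\<in>{1..3}. (P s i)^2)" using kap[OF s] by (simp add: kappa_eq)
      also have "\<dots> = (\<Sum>i\<in>{1..3}. (E * xd s i / n s)^2)"
        by (rule sum.cong) (auto simp: P_def momi E_def)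
      also have "\<dots> = E^2 * S / (n s)^2" unfolding S_def sum13 by (simp add: power_divide power_mult_distrib add_divide_distrib distrib_left)
      finally show ?thesis .
    qed
    have cn: "- (- ((xd s 0)^2) + E * S) / (2 * (n s)^2) - m^2 / 2 = 0"
      using con[OF s] dlag_n[OF npos[OF s]] unfolding E_def S_def by simp
    have w: "1 + c * E > 0" using c E by (simp add: add_pos_nonneg)
    have Om: "Omega0 l c (x s 0) = l/2 * phi l c (x s 0) / (1 + c*E)" unfolding E_def by (rule Omega_phi[OF c])
    have "Omega0 l c (x s 0) * xd s 0 * (- xd s 0 / n s) + phi l c (x s 0) * (1 / (2 * n s) * (l * E * S)) = 0"
      by (rule alg[OF npos[OF s] K0 refl E cK KS cn Om w])
    then show ?thesis using D P0 unfolding E_def S_def by (simp add: algebra_simps)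
  qed
  have F0c: "F0 u = F0 s0" if "u \<in> I" for u
    by (rule const_on[OF I dF0 that s0])
  have part0: "contr (Ups0 l c (x a)) (mom l m (n a) (x a) (xd a))
              = contr (Ups0 l c (x b)) (mom l m (n b) (x b) (xd b))"
    using F0c[OF a] F0c[OF b] by (simp add: contr_Ups0 F0_def P_def)
  have parti: "contr (Upsi l c i (x a)) (mom l m (n a) (x a) (xd a))
              = contr (Upsi l c i (x b)) (mom l m (n b) (x b) (xd b))" if i: "i \<in> {1..3}" for i
  proof -
    define Fi where "Fi u = F0 u * x u i - (2 / l) * psi l c (x u 0) * P u i" for u
    have i4: "i < 4" "i \<noteq> 0" using i by auto
    have dFi: "(Fi has_real_derivative 0) (at s)" if s: "s \<in> I" for s
    proof -
      have d1: "((\<lambda>u. psi l c (x u 0)) has_real_derivative (- (l / 2) * phi l c (x s 0) / exp (l * x s 0)) * xd s 0) (at s)"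
        by (rule DERIV_chain2[OF psi_deriv'[OF c l] dx[OF s]]) simp
      have d2: "((\<lambda>u. P u i) has_real_derivative 0) (at s)"
        using dP[OF s i4(1)] pd_lagi[OF i4(2)] by simp
      have d3: "((\<lambda>u. x u i) has_real_derivative xd s i) (at s)" using dx[OF s i4(1)] .
      have D: "(Fi has_real_derivative 0 * x s i + xd s i * F0 s - ((2 / l) * ((- (l / 2) * phi l c (x s 0) / exp (l * x s 0)) * xd s 0) * P s i + 0 * ((2 / l) * psi l c (x s 0)))) (at s)"
        unfolding Fi_def
        by (intro DERIV_diff DERIV_mult DERIV_cmult d1 d2 d3 dF0[OF s])
      have "xd s i * F0 s - ((2 / l) * ((- (l / 2) * phi l c (x s 0) / exp (l * x s 0)) * xd s 0) * P s i) = 0"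
        unfolding F0_def P_def using i l npos[OF s] by (simp add: mom0 momi field_simps)
      then show ?thesis using D by (simp add: algebra_simps)
    qed
    have "Fi a = Fi b" by (rule const_on[OF I dFi a b])
    then show ?thesis using i by (simp add: contr_Upsi Fi_def F0_def P_def algebra_simps)
  qed
  show ?thesis using part0 parti by blast
qed
lemma Om00: "Omega0 l 0 t = l / 2 * exp (l * t / 2)"
  by (simp add: Omega0_def)

lemma ckv0: assumes l: "l \<noteq> 0" shows "proper_ckv l (Ups0 l 0)"
  unfolding proper_ckv_def
proof (intro exI conjI allI impI)
  fix q :: "nat \<Rightarrow> real" and mu nu :: nat assume "mu < 4" "nu < 4"
  show "lie (Ups0 l 0) (gmet l) q mu nu = 2 * Omega0 l 0 (q 0) * gmet l q mu nu"
    using lie_Ups0[of 0 mu nu l q] \<open>mu < 4\<close> \<open>nu < 4\<close> by simp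
next
  show "Omega0 l 0 ((\<lambda>_. 0) 0) \<noteq> Omega0 l 0 ((\<lambda>_. 2 / l) 0)"
    using l by (simp add: Om00)
qed

lemma ckvi: assumes l: "l \<noteq> 0" and i: "i \<in> {1..3}" shows "proper_ckv l (Upsi l 0 i)"
  unfolding proper_ckv_def
proof (intro exI conjI allI impI)
  fix q :: "nat \<Rightarrow> real" and mu nu :: nat assume "mu < 4" "nu < 4"
  show "lie (Upsi l 0 i) (gmet l) q mu nu = 2 * (q i * Omega0 l 0 (q 0)) * gmet l q mu nu"
    using lie_Upsi[of 0 l i mu nu q] l i \<open>mu < 4\<close> \<open>nu < 4\<close> by simp
next
  show "(\<lambda>_. 0) i * Omega0 l 0 ((\<lambda>_. 0) 0) \<noteq> (\<lambda>_. 1) i * Omega0 l 0 ((\<lambda>_. 1) 0)"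
    using l by (simp add: Om00)
qed

theorem mainTheorem5:
  fixes l m :: real
  assumes l: "l \<noteq> 0"
  shows
    "(\<forall>c \<ge> 0. \<forall>q mu nu. mu < 4 \<longrightarrow> nu < 4 \<longrightarrow>
        lie (Ups0 l c) (gmet l) q mu nu
          = 2 * Omega0 l c (q 0) * (gmet l q mu nu + c * Kten l q mu nu)
      \<and> (\<forall>i\<in>{1..3}. lie (Upsi l c i) (gmet l) q mu nu
          = 2 * q i * Omega0 l c (q 0) * (gmet l q mu nu + c * Kten l q mu nu)))
   \<and> proper_ckv l (Ups0 l 0) \<and> (\<forall>i\<in>{1..3}. proper_ckv l (Upsi l 0 i))
   \<and> (\<forall>I n x xd. open I \<longrightarrow> is_interval I \<longrightarrow> EL_solution l m I n x xd \<longrightarrow>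
        (\<forall>s\<in>I. kappa l (x s) (mom l m (n s) (x s) (xd s)) \<noteq> 0) \<longrightarrow>
        (\<forall>s\<in>I. kappa l (x s) (mom l m (n s) (x s) (xd s))
                 = (\<Sum>i\<in>{1..3}. (mom l m (n s) (x s) (xd s) i)^2)) \<and>
        (\<forall>s0\<in>I. let c = m^2 / kappa l (x s0) (mom l m (n s0) (x s0) (xd s0)) in
          \<forall>a\<in>I. \<forall>b\<in>I.
            contr (Ups0 l c (x a)) (mom l m (n a) (x a) (xd a))
              = contr (Ups0 l c (x b)) (mom l m (n b) (x b) (xd b))
          \<and> (\<forall>i\<in>{1..3}. contr (Upsi l c i (x a)) (mom l m (n a) (x a) (xd a))
              = contr (Upsi l c i (x b)) (mom l m (n b) (x b) (xd b)))))"
proof (intro conjI allI impI ballI)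
  fix c :: real and q :: "nat \<Rightarrow> real" and mu nu :: nat
  assume "c \<ge> 0" "mu < 4" "nu < 4"
  then show "lie (Ups0 l c) (gmet l) q mu nu
          = 2 * Omega0 l c (q 0) * (gmet l q mu nu + c * Kten l q mu nu)"
    by (rule lie_Ups0)
  fix i :: nat assume "i \<in> {1..3}"
  show "lie (Upsi l c i) (gmet l) q mu nu
          = 2 * q i * Omega0 l c (q 0) * (gmet l q mu nu + c * Kten l q mu nu)"
    by (rule lie_Upsi[OF \<open>c \<ge> 0\<close> l \<open>i \<in> {1..3}\<close> \<open>mu < 4\<close> \<open>nu < 4\<close>])
next
  show "proper_ckv l (Ups0 l 0)" by (rule ckv0[OF l])
next
  fix i :: nat assume "i \<in> {1..3}"
  then show "proper_ckv l (Upsi l 0 i)" by (rule ckvi[OF l])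
next
  fix I :: "real set" and n :: "real \<Rightarrow> real" and x xd :: "real \<Rightarrow> nat \<Rightarrow> real" and s :: real
  show "kappa l (x s) (mom l m (n s) (x s) (xd s)) = (\<Sum>i\<in>{1..3}. (mom l m (n s) (x s) (xd s) i)^2)"
    by (rule kappa_eq)
next
  fix I :: "real set" and n x xd s0
  assume "open I" "is_interval I" "EL_solution l m I n x xd"
    "\<forall>s\<in>I. kappa l (x s) (mom l m (n s) (x s) (xd s)) \<noteq> 0" "s0 \<in> I"
  then show "let c = m^2 / kappa l (x s0) (mom l m (n s0) (x s0) (xd s0)) in
          \<forall>a\<in>I. \<forall>b\<in>I.
            contr (Ups0 l c (x a)) (mom l m (n a) (x a) (xd a))
              = contr (Ups0 l c (x b)) (mom l m (n b) (x b) (xd b))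
          \<and> (\<forall>i\<in>{1..3}. contr (Upsi l c i (x a)) (mom l m (n a) (x a) (xd a))
              = contr (Upsi l c i (x b)) (mom l m (n b) (x b) (xd b)))"
    unfolding Let_def
    by (intro ballI part3[OF l \<open>is_interval I\<close> \<open>EL_solution l m I n x xd\<close> \<open>\<forall>s\<in>I. kappa l (x s) (mom l m (n s) (x s) (xd s)) \<noteq> 0\<close> \<open>s0 \<in> I\<close>] refl)
qed
end
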